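(* Let $\mu>0$ and $f\in C([0,1])$. Then $|\mathscr{L}_n^K(f,x)-f(x)|=o(n^{-1})$ as $n\to+\infty$ for every $0<x<1$ if and only if $f$ is a classical solution on $(0,1)$ of the differential equation $A(x)f_\mu'(x)+B(x)f_\mu''(x)=0$, where $A(x):=\frac12+\frac{x-x^2}{2(1+\mu)}-x$ and $B(x):=\frac{x-x^2}{2}$; equivalently, $\big(1+\mu-x(1+2\mu)-x^2\big)f_\mu'(x)+(1+\mu)(x-x^2)f_\mu''(x)=0$, $0<x<1$.
   Context: Fix $\mu>0$. Let $\ln_\mu(x):=\ln(1+\mu+x)$ for $x\in[0,1]$, and for $f:[0,1]\to\mathbb{R}$ let $f_\mu(x):=f(x)/\ln_\mu(x)$. Let $p_{n,k}(y):=\binom{n}{k}y^k(1-y)^{n-k}$ and $a_{n+1}(x):=\dfrac{\ln\left(1+\frac{x}{(n+1)(1+\mu)}\right)}{\ln\left(1+\frac{1}{(n+1)(1+\mu)}\right)}$, $x\in[0,1]$. For $n\in\mathbb{N}$ define $\mathscr{L}_n^K(f,x)=\mathscr{L}_n^K f(x):=\ln_\mu(x)\sum_{k=0}^n p_{n,k}(a_{n+1}(x))\,(n+1)\int_{k/(n+1)}^{(k+1)/(n+1)} f_\mu(t)\,dt$, $x\in[0,1]$. *)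

theory Defs
  imports "HOL-Analysis.Analysis" "HOL-Library.Landau_Symbols"
begin

definition lnmu :: "real \<Rightarrow> real \<Rightarrow> real" where
  "lnmu \<mu> x = ln (1 + \<mu> + x)"

definition fmu :: "real \<Rightarrow> (real \<Rightarrow> real) \<Rightarrow> real \<Rightarrow> real" where
  "fmu \<mu> f x = f x / lnmu \<mu> x"

definition pnk :: "nat \<Rightarrow> nat \<Rightarrow> real \<Rightarrow> real" where
  "pnk n k y = real (n choose k) * y ^ k * (1 - y) ^ (n - k)"

definition aseq :: "real \<Rightarrow> nat \<Rightarrow> real \<Rightarrow> real" where
  "aseq \<mu> m x = ln (1 + x / (real m * (1 + \<mu>))) / ln (1 + 1 / (real m * (1 + \<mu>)))"

definition LK :: "real \<Rightarrow> nat \<Rightarrow> (real \<Rightarrow> real) \<Rightarrow> real \<Rightarrow> real" where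
  "LK \<mu> n f x = lnmu \<mu> x *
     (\<Sum>k=0..n. pnk n k (aseq \<mu> (n+1) x) * (real n + 1) *
        integral {real k / (real n + 1) .. (real k + 1) / (real n + 1)} (fmu \<mu> f))"

definition Acoef :: "real \<Rightarrow> real \<Rightarrow> real" where
  "Acoef \<mu> x = 1/2 + (x - x^2) / (2 * (1 + \<mu>)) - x"

definition Bcoef :: "real \<Rightarrow> real" where
  "Bcoef x = (x - x^2) / 2"

end

theory Submission imports Defs "HOL-Probability.Hoeffding" "HOL-Real_Asymp.Real_Asymp" begin

definition Kop :: "nat \<Rightarrow> (real \<Rightarrow> real) \<Rightarrow> real \<Rightarrow> real" where
  "Kop n h y = (\<Sum>k\<le>n. Bernstein n k y * (real n + 1) *
      integral {real k / (real n + 1) .. (real k + 1) / (real n + 1)} h)"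

lemma LK_Kop:
  "LK \<mu> n f x = lnmu \<mu> x * Kop n (fmu \<mu> f) (aseq \<mu> (n+1) x)"
  unfolding LK_def Kop_def pnk_def Bernstein_def by (simp add: atLeast0AtMost)

lemma Ik_sub:
  assumes "k \<le> n"
  shows "{real k / (real n + 1) .. (real k + 1) / (real n + 1)} \<subseteq> {0..1}"
  using assms by (auto simp: field_simps)

lemma Ik_le: "real k / (real n + 1) \<le> (real k + 1) / (real n + 1)"
  by (simp add: divide_right_mono)

lemma Ik_len: "(real k + 1) / (real n + 1) - real k / (real n + 1) = 1 / (real n + 1)"
  by (simp add: field_simps)

lemma int_cont:
  fixes h :: "real \<Rightarrow> real"
  assumes "continuous_on {0..1} h" "k \<le> n"
  shows "h integrable_on {real k / (real n + 1) .. (real k + 1) / (real n + 1)}"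
proof -
  have "continuous_on {real k / (real n + 1) .. (real k + 1) / (real n + 1)} h"
    using continuous_on_subset[OF assms(1) Ik_sub[OF assms(2)]] .
  then show ?thesis by (rule integrable_continuous_interval)
qed

lemma Kop_add:
  assumes "continuous_on {0..1} h1" "continuous_on {0..1} h2"
  shows "Kop n (\<lambda>t. h1 t + h2 t) y = Kop n h1 y + Kop n h2 y"
  unfolding Kop_def sum.distrib[symmetric]
proof (intro sum.cong refl)
  fix k assume "k \<in> {..n}"
  then have "integral {real k / (real n + 1) .. (real k + 1) / (real n + 1)} (\<lambda>t. h1 t + h2 t) =
    integral {real k / (real n + 1) .. (real k + 1) / (real n + 1)} h1 + integral {real k / (real n + 1) .. (real k + 1) / (real n + 1)} h2"
    by (intro integral_add int_cont) (use assms in auto)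
  then show "Bernstein n k y * (real n + 1) * integral {real k / (real n + 1) .. (real k + 1) / (real n + 1)} (\<lambda>t. h1 t + h2 t) =
    Bernstein n k y * (real n + 1) * integral {real k / (real n + 1) .. (real k + 1) / (real n + 1)} h1 + Bernstein n k y * (real n + 1) * integral {real k / (real n + 1) .. (real k + 1) / (real n + 1)} h2"
    by (simp add: algebra_simps)
qed

lemma Kop_diff:
  assumes "continuous_on {0..1} h1" "continuous_on {0..1} h2"
  shows "Kop n (\<lambda>t. h1 t - h2 t) y = Kop n h1 y - Kop n h2 y"
  unfolding Kop_def sum_subtractf[symmetric]
proof (intro sum.cong refl)
  fix k assume "k \<in> {..n}"
  then have "integral {real k / (real n + 1) .. (real k + 1) / (real n + 1)} (\<lambda>t. h1 t - h2 t) =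
    integral {real k / (real n + 1) .. (real k + 1) / (real n + 1)} h1 - integral {real k / (real n + 1) .. (real k + 1) / (real n + 1)} h2"
    by (intro integral_diff int_cont) (use assms in auto)
  note eq = this
  then show "Bernstein n k y * (real n + 1) * integral {real k / (real n + 1) .. (real k + 1) / (real n + 1)} (\<lambda>t. h1 t - h2 t) =
    Bernstein n k y * (real n + 1) * integral {real k / (real n + 1) .. (real k + 1) / (real n + 1)} h1 - Bernstein n k y * (real n + 1) * integral {real k / (real n + 1) .. (real k + 1) / (real n + 1)} h2"
    unfolding eq by (simp only: right_diff_distrib)
qed

lemma Kop_cmult:
  shows "Kop n (\<lambda>t. c * h t) y = c * Kop n h y"
  unfolding Kop_def
  by (simp add: sum_distrib_left algebra_simps)

lemma Kop_const: "Kop n (\<lambda>t. c) y = c"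
proof -
  have "Kop n (\<lambda>t. c) y = (\<Sum>k\<le>n. Bernstein n k y * c)"
    unfolding Kop_def using Ik_le
    by (intro sum.cong) (auto simp: Ik_len)
  also have "\<dots> = c" by (simp add: sum_distrib_right[symmetric])
  finally show ?thesis .
qed

lemma int_t:
  assumes "p \<le> q"
  shows "integral {p..q} (\<lambda>t::real. t) = (q^2 - p^2) / 2"
proof -
  have "((\<lambda>t. t) has_integral ((\<lambda>t. t^2/2) q - (\<lambda>t. t^2/2) p)) {p..q}"
    by (rule fundamental_theorem_of_calculus[OF assms])
       (auto intro!: derivative_eq_intros simp: has_real_derivative_iff_has_vector_derivative[symmetric])
  then show ?thesis by (simp add: integral_unique diff_divide_distrib)
qed

lemma int_t2:
  assumes "p \<le> q"
  shows "integral {p..q} (\<lambda>t::real. t^2) = (q^3 - p^3) / 3"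
proof -
  have "((\<lambda>t. t^2) has_integral ((\<lambda>t. t^3/3) q - (\<lambda>t. t^3/3) p)) {p..q}"
    by (rule fundamental_theorem_of_calculus[OF assms])
       (auto intro!: derivative_eq_intros simp: has_real_derivative_iff_has_vector_derivative[symmetric])
  then show ?thesis by (simp add: integral_unique diff_divide_distrib)
qed

lemma alg1: "(m::real) > 0 \<Longrightarrow> (((k + 1) / m)^2 - (k / m)^2) / 2 = (2 * k + 1) / (2 * m^2)"
  by (simp add: field_simps power2_eq_square)

lemma alg2: "(m::real) > 0 \<Longrightarrow> (((k + 1) / m)^3 - (k / m)^3) / 3 = (3 * k * (k - 1) + 6 * k + 1) / (3 * m^3)"
  by (simp add: field_simps power3_eq_cube)

lemma alg3: "(m::real) > 0 \<Longrightarrow> b * m * (c / (2 * m^2)) = b * (c / (2 * m))"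
  by (simp add: field_simps power2_eq_square)

lemma alg4: "(m::real) > 0 \<Longrightarrow> b * m * (c / (3 * m^3)) = b * (c / (3 * m^2))"
  by (simp add: field_simps power2_eq_square power3_eq_cube)

lemma sumalg1:
  fixes B :: "nat \<Rightarrow> real"
  assumes "m > 0"
  shows "(\<Sum>k\<le>n. B k * ((2 * real k + 1) / (2 * m))) = (2 * (\<Sum>k\<le>n. real k * B k) + (\<Sum>k\<le>n. B k)) / (2 * m)"
proof -
  have "(2 * (\<Sum>k\<le>n. real k * B k) + (\<Sum>k\<le>n. B k)) / (2 * m) = (\<Sum>k\<le>n. (2 * (real k * B k) + B k) / (2 * m))"
    by (simp add: sum_divide_distrib[symmetric] sum.distrib sum_distrib_left)
  also have "\<dots> = (\<Sum>k\<le>n. B k * ((2 * real k + 1) / (2 * m)))"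
    using assms by (intro sum.cong) (simp_all add: field_simps)
  finally show ?thesis by simp
qed

lemma sumalg2:
  fixes B :: "nat \<Rightarrow> real"
  assumes "m > 0"
  shows "(\<Sum>k\<le>n. B k * ((3 * real k * (real k - 1) + 6 * real k + 1) / (3 * m))) = (3 * (\<Sum>k\<le>n. real k * (real k - 1) * B k) + 6 * (\<Sum>k\<le>n. real k * B k) + (\<Sum>k\<le>n. B k)) / (3 * m)"
proof -
  have "(3 * (\<Sum>k\<le>n. real k * (real k - 1) * B k) + 6 * (\<Sum>k\<le>n. real k * B k) + (\<Sum>k\<le>n. B k)) / (3 * m) = (\<Sum>k\<le>n. (3 * (real k * (real k - 1) * B k) + 6 * (real k * B k) + B k) / (3 * m))"
    by (simp add: sum_divide_distrib[symmetric] sum.distrib sum_distrib_left)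
  also have "\<dots> = (\<Sum>k\<le>n. B k * ((3 * real k * (real k - 1) + 6 * real k + 1) / (3 * m)))"
    using assms by (intro sum.cong) (simp_all add: field_simps)
  finally show ?thesis by simp
qed

lemma Kop_t: "Kop n (\<lambda>t. t) y = (2 * real n * y + 1) / (2 * (real n + 1))"
proof -
  have "Kop n (\<lambda>t. t) y = (\<Sum>k\<le>n. Bernstein n k y * ((2 * real k + 1) / (2 * (real n + 1))))"
    unfolding Kop_def
  proof (intro sum.cong refl)
    fix k assume "k \<in> {..n}"
    have "integral {real k / (real n + 1) .. (real k + 1) / (real n + 1)} (\<lambda>t. t) = (((real k + 1) / (real n + 1))^2 - (real k / (real n + 1))^2) / 2"
      by (rule int_t[OF Ik_le])
    moreover have "\<dots> = (2 * real k + 1) / (2 * (real n + 1)^2)"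
      by (rule alg1) simp
    ultimately show "Bernstein n k y * (real n + 1) * integral {real k / (real n + 1) .. (real k + 1) / (real n + 1)} (\<lambda>t. t) = Bernstein n k y * ((2 * real k + 1) / (2 * (real n + 1)))"
      by (simp only:) (rule alg3, simp)
  qed
  also have "\<dots> = (2 * (\<Sum>k\<le>n. real k * Bernstein n k y) + (\<Sum>k\<le>n. Bernstein n k y)) / (2 * (real n + 1))"
    by (rule sumalg1) simp
  also have "\<dots> = (2 * real n * y + 1) / (2 * (real n + 1))" by simp
  finally show ?thesis .
qed

lemma Kop_t2: "Kop n (\<lambda>t. t^2) y = (3 * (real n * (real n - 1) * y^2 + real n * y) + 3 * real n * y + 1) / (3 * (real n + 1)^2)"
proof -
  have "Kop n (\<lambda>t. t^2) y = (\<Sum>k\<le>n. Bernstein n k y * ((3 * real k * (real k - 1) + 6 * real k + 1) / (3 * (real n + 1)^2)))"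
    unfolding Kop_def
  proof (intro sum.cong refl)
    fix k assume "k \<in> {..n}"
    have "integral {real k / (real n + 1) .. (real k + 1) / (real n + 1)} (\<lambda>t. t^2) = (((real k + 1) / (real n + 1))^3 - (real k / (real n + 1))^3) / 3"
      by (rule int_t2[OF Ik_le])
    moreover have "\<dots> = (3 * real k * (real k - 1) + 6 * real k + 1) / (3 * (real n + 1)^3)"
      by (rule alg2) simp
    ultimately show "Bernstein n k y * (real n + 1) * integral {real k / (real n + 1) .. (real k + 1) / (real n + 1)} (\<lambda>t. t^2) = Bernstein n k y * ((3 * real k * (real k - 1) + 6 * real k + 1) / (3 * (real n + 1)^2))"
      by (simp only:) (rule alg4, simp)
  qed
  also have "\<dots> = (3 * (\<Sum>k\<le>n. real k * (real k - 1) * Bernstein n k y) + 6 * (\<Sum>k\<le>n. real k * Bernstein n k y) + (\<Sum>k\<le>n. Bernstein n k y)) / (3 * (real n + 1)^2)"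
    by (rule sumalg2) simp
  also have "\<dots> = (3 * (real n * (real n - 1) * y^2 + real n * y) + 3 * real n * y + 1) / (3 * (real n + 1)^2)"
    by (simp only: sum_kk_Bernstein sum_k_Bernstein sum_Bernstein) (simp add: algebra_simps)
  finally show ?thesis .
qed

lemma asym_d:
  assumes "0 < x" "x < 1" "(0::real) < c"
  shows "((\<lambda>n::nat. real n * (ln (1 + x / (real (n+1) * c)) / ln (1 + 1 / (real (n+1) * c)) - x)) \<longlongrightarrow> (x - x^2)/(2*c)) at_top"
  using assms
  apply real_asymp
  apply (simp add: field_simps power2_eq_square)
  done

lemma asym_Y:
  assumes "0 < x" "x < 1" "(0::real) < c"
  shows "((\<lambda>n::nat. ln (1 + x / (real (n+1) * c)) / ln (1 + 1 / (real (n+1) * c))) \<longlongrightarrow> x) at_top"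
  using assms by real_asymp

lemma asym_M1:
  assumes "0 < x" "x < 1" "(0::real) < c"
  shows "((\<lambda>n::nat. real n * ((2 * real n * (ln (1 + x / (real (n+1) * c)) / ln (1 + 1 / (real (n+1) * c))) + 1) / (2 * (real n + 1)) - x)) \<longlongrightarrow> 1/2 + (x - x^2)/(2*c) - x) at_top"
  using assms
  apply real_asymp
  apply (simp add: field_simps power2_eq_square)
  done

lemma aseq_eq: "aseq \<mu> (n+1) x = ln (1 + x / (real (n+1) * (1 + \<mu>))) / ln (1 + 1 / (real (n+1) * (1 + \<mu>)))"
  unfolding aseq_def by simp

lemma lim_Y:
  assumes "0 < x" "x < 1" "\<mu> > 0"
  shows "(\<lambda>n. aseq \<mu> (n+1) x) \<longlonglongrightarrow> x"
  unfolding aseq_eq using asym_Y[of x "1+\<mu>"] assms by simp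

lemma lim_d:
  assumes "0 < x" "x < 1" "\<mu> > 0"
  shows "(\<lambda>n. real n * (aseq \<mu> (n+1) x - x)) \<longlonglongrightarrow> (x - x^2)/(2*(1+\<mu>))"
  unfolding aseq_eq using asym_d[of x "1+\<mu>"] assms by simp

lemma lim_M1:
  assumes "0 < x" "x < 1" "\<mu> > 0"
  shows "(\<lambda>n. real n * (Kop n (\<lambda>t. t) (aseq \<mu> (n+1) x) - x)) \<longlonglongrightarrow> Acoef \<mu> x"
  unfolding Kop_t aseq_eq Acoef_def using asym_M1[of x "1+\<mu>"] assms by (simp add: algebra_simps)

lemma M2_alg0:
  assumes "(m::real) > 0" "n = m - 1"
  shows "n * ((3 * (n * (n - 1) * y^2 + n * y) + 3 * n * y + 1) / (3 * m^2) - 2 * x * ((2 * n * y + 1) / (2 * m)) + x^2)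
    = (x - x^2) * (n * (n - 1) / m^2) + 2 * (1 - 2 * x) * (n * (y - x)) * (n / m^2) + (n * (y - x))^2 * ((n - 1) / m^2) + n / (3 * m^2)"
  using assms(1) unfolding assms(2)
  by (simp add: field_simps power2_eq_square)

lemma M2_alg:
  assumes "(n::real) > 0"
  shows "n * ((3 * (n * (n - 1) * y^2 + n * y) + 3 * n * y + 1) / (3 * (n + 1)^2) - 2 * x * ((2 * n * y + 1) / (2 * (n + 1))) + x^2)
    = (x - x^2) * (n * (n - 1) / (n+1)^2) + 2 * (1 - 2 * x) * (n * (y - x)) * (n / (n+1)^2) + (n * (y - x))^2 * ((n - 1) / (n+1)^2) + n / (3 * (n+1)^2)"
  by (rule M2_alg0) (use assms in auto)

lemma Kop_sq:
  "Kop n (\<lambda>t. (t - x)^2) y = Kop n (\<lambda>t. t^2) y - 2 * x * Kop n (\<lambda>t. t) y + x^2"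
proof -
  have "Kop n (\<lambda>t. (t - x)^2) y = Kop n (\<lambda>t. (t^2 - 2 * x * t) + x^2) y"
    by (simp add: power2_eq_square algebra_simps)
  also have "\<dots> = Kop n (\<lambda>t. t^2 - 2 * x * t) y + x^2"
    by (subst Kop_add) (auto intro!: continuous_intros simp: Kop_const)
  also have "Kop n (\<lambda>t. t^2 - 2 * x * t) y = Kop n (\<lambda>t. t^2) y - Kop n (\<lambda>t. 2 * x * t) y"
    by (subst Kop_diff) (auto intro!: continuous_intros)
  also have "Kop n (\<lambda>t. 2 * x * t) y = 2 * x * Kop n (\<lambda>t. t) y"
    by (rule Kop_cmult)
  finally show ?thesis by simp
qed

lemma lim_M2:
  assumes "0 < x" "x < 1" "\<mu> > 0"
  shows "(\<lambda>n. real n * Kop n (\<lambda>t. (t - x)^2) (aseq \<mu> (n+1) x)) \<longlonglongrightarrow> x - x^2"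
proof -
  define d where "d n = real n * (aseq \<mu> (n+1) x - x)" for n
  have d: "d \<longlonglongrightarrow> (x - x^2)/(2*(1+\<mu>))" unfolding d_def by (rule lim_d[OF assms])
  have l1: "(\<lambda>n. real n * (real n - 1) / (real n + 1)^2) \<longlonglongrightarrow> 1" by real_asymp
  have l2: "(\<lambda>n. real n / (real n + 1)^2) \<longlonglongrightarrow> 0" by real_asymp
  have l3: "(\<lambda>n. (real n - 1) / (real n + 1)^2) \<longlonglongrightarrow> 0" by real_asymp
  have l4: "(\<lambda>n. real n / (3 * (real n + 1)^2)) \<longlonglongrightarrow> 0" by real_asymp
  have lim: "(\<lambda>n. (x - x^2) * (real n * (real n - 1) / (real n+1)^2) + 2 * (1 - 2 * x) * d n * (real n / (real n+1)^2) + (d n)^2 * ((real n - 1) / (real n+1)^2) + real n / (3 * (real n+1)^2)) \<longlonglongrightarrow> (x - x^2) * 1 + 2 * (1 - 2 * x) * ((x - x^2)/(2*(1+\<mu>))) * 0 + ((x - x^2)/(2*(1+\<mu>)))^2 * 0 + 0"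
    by (intro tendsto_intros l1 l2 l3 l4 d)
  have ev: "eventually (\<lambda>n. (x - x^2) * (real n * (real n - 1) / (real n+1)^2) + 2 * (1 - 2 * x) * d n * (real n / (real n+1)^2) + (d n)^2 * ((real n - 1) / (real n+1)^2) + real n / (3 * (real n+1)^2)
     = real n * Kop n (\<lambda>t. (t - x)^2) (aseq \<mu> (n+1) x)) sequentially"
    using eventually_gt_at_top[of 0]
  proof eventually_elim
    case (elim n)
    then show ?case unfolding Kop_sq Kop_t Kop_t2 d_def
      using M2_alg[of "real n" "aseq \<mu> (n+1) x" x] by simp
  qed
  show ?thesis using Lim_transform_eventually[OF lim ev] by simp
qed

definition tailsum :: "nat \<Rightarrow> real \<Rightarrow> real \<Rightarrow> real \<Rightarrow> real" where
  "tailsum n y x \<eta> = (\<Sum>k\<le>n. if x - \<eta> < real k / (real n + 1) \<and> (real k + 1) / (real n + 1) < x + \<eta> then 0 else Bernstein n k y)"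

lemma aseq_01:
  assumes "\<mu> > 0" "0 \<le> x" "x \<le> 1"
  shows "0 \<le> aseq \<mu> (n+1) x \<and> aseq \<mu> (n+1) x \<le> 1"
proof -
  define c where "c = real (n+1) * (1 + \<mu>)"
  have c: "c > 0" unfolding c_def using assms by simp
  have d: "ln (1 + 1 / c) > 0" using c by (intro ln_gt_zero) simp
  have "0 \<le> ln (1 + x / c)" using c assms by simp
  moreover have "ln (1 + x / c) \<le> ln (1 + 1 / c)" using c assms
    by (subst ln_le_cancel_iff) (auto simp: divide_right_mono add_pos_nonneg)
  ultimately show ?thesis unfolding aseq_def c_def[symmetric] using d
    by (auto simp: divide_le_eq_1)
qed

lemma tail_point:
  assumes "k \<le> n" "n > 0" "\<eta> > 0" "\<bar>y - x\<bar> < \<eta>/4" "1 / real n \<le> \<eta>/4"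
    "\<not> (x - \<eta> < real k / (real n + 1) \<and> (real k + 1) / (real n + 1) < x + \<eta>)"
  shows "\<bar>real k / real n - y\<bar> \<ge> \<eta>/2"
proof -
  have n: "real n > 0" using assms by simp
  have a1: "real k / real n - real k / (real n + 1) \<le> 1 / real n"
  proof -
    have "real k / real n - real k / (real n + 1) = real k / (real n * (real n + 1))"
      using n by (simp add: field_simps)
    also have "\<dots> \<le> real n / (real n * (real n + 1))"
      using assms n by (intro divide_right_mono) auto
    also have "\<dots> = 1 / (real n + 1)" using n by simp
    also have "\<dots> \<le> 1 / real n" using n by (intro divide_left_mono) auto
    finally show ?thesis .
  qed
  have a2: "real k / (real n + 1) \<le> real k / real n"
    using n by (intro divide_left_mono) auto
  have a3: "1 / (real n + 1) \<le> 1 / real n" using n by (intro divide_left_mono) auto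
  have a4: "(real k + 1) / (real n + 1) = real k / (real n + 1) + 1 / (real n + 1)"
    by (simp add: add_divide_distrib)
  show ?thesis using assms(4,5,6) a1 a2 a3 a4 by (auto simp: abs_if split: if_splits)
qed

lemma binom_tail:
  assumes "y \<in> {0..1}" "n > 0" "\<epsilon> \<ge> 0"
  shows "(\<Sum>k\<in>{k. k \<le> n \<and> \<bar>real k / real n - y\<bar> \<ge> \<epsilon>}. Bernstein n k y) \<le> 2 * exp (-2 * real n * \<epsilon>^2)"
proof -
  interpret binomial_distribution n y using assms by unfold_locales
  define S where "S = {k. k \<le> n \<and> \<bar>real k / real n - y\<bar> \<ge> \<epsilon>}"
  have fin: "finite S" unfolding S_def by auto
  have "(\<Sum>k\<in>S. Bernstein n k y) = (\<Sum>k\<in>S. pmf (binomial_pmf n y) k)"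
    using assms by (intro sum.cong) (auto simp: Bernstein_def)
  also have "\<dots> = measure_pmf.prob (binomial_pmf n y) S"
    using fin by (simp add: measure_measure_pmf_finite)
  also have "\<dots> \<le> measure_pmf.prob (binomial_pmf n y) {x. \<bar>real x / real n - y\<bar> \<ge> \<epsilon>}"
    by (intro measure_pmf.finite_measure_mono) (auto simp: S_def)
  also have "\<dots> \<le> 2 * exp (-2 * real n * \<epsilon>^2)"
    using prob_abs_ge'[OF assms(2) assms(3)] by simp
  finally show ?thesis unfolding S_def .
qed

lemma tail_lim:
  assumes "0 < x" "x < 1" "\<mu> > 0" "\<eta> > 0"
  shows "(\<lambda>n. real n * tailsum n (aseq \<mu> (n+1) x) x \<eta>) \<longlonglongrightarrow> 0"
proof (rule tendsto_sandwich[where f = "\<lambda>_. 0" and h = "\<lambda>n. real n * (2 * exp (-2 * real n * (\<eta>/2)^2))"])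
  have Y: "(\<lambda>n. aseq \<mu> (n+1) x) \<longlonglongrightarrow> x" by (rule lim_Y[OF assms(1-3)])
  have ev1: "eventually (\<lambda>n. \<bar>aseq \<mu> (n+1) x - x\<bar> < \<eta>/4) sequentially"
    using tendstoD[OF Y, of "\<eta>/4"] assms by (simp add: dist_real_def)
  have ev2: "eventually (\<lambda>n. 1 / real n \<le> \<eta>/4) sequentially"
  proof -
    have "(\<lambda>n. 1 / real n) \<longlonglongrightarrow> 0" by real_asymp
    from tendstoD[OF this, of "\<eta>/4"] assms show ?thesis
      by (auto elim!: eventually_mono simp: dist_real_def)
  qed
  have B0: "\<And>n k. 0 \<le> Bernstein n k (aseq \<mu> (n+1) x)"
    using aseq_01[of \<mu> x] assms by (intro Bernstein_nonneg) auto
  show "eventually (\<lambda>n. 0 \<le> real n * tailsum n (aseq \<mu> (n+1) x) x \<eta>) sequentially"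
    using B0 by (intro always_eventually allI mult_nonneg_nonneg) (auto simp: tailsum_def intro!: sum_nonneg)
  show "eventually (\<lambda>n. real n * tailsum n (aseq \<mu> (n+1) x) x \<eta> \<le> real n * (2 * exp (-2 * real n * (\<eta>/2)^2))) sequentially"
    using ev1 ev2 eventually_gt_at_top[of 0]
  proof eventually_elim
    case (elim n)
    define y where "y = aseq \<mu> (n+1) x"
    have y01: "y \<in> {0..1}" using aseq_01[of \<mu> x n] assms unfolding y_def by auto
    define S where "S = {k. k \<le> n \<and> \<bar>real k / real n - y\<bar> \<ge> \<eta>/2}"
    have setS: "{k\<in>{..n}. k \<in> S} = S" by (auto simp: S_def)
    have "tailsum n y x \<eta> \<le> (\<Sum>k\<le>n. if k \<in> S then Bernstein n k y else 0)"
      unfolding tailsum_def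
    proof (intro sum_mono)
      fix k assume k: "k \<in> {..n}"
      show "(if x - \<eta> < real k / (real n + 1) \<and> (real k + 1) / (real n + 1) < x + \<eta> then 0 else Bernstein n k y)
         \<le> (if k \<in> S then Bernstein n k y else 0)"
        using tail_point[of k n \<eta> y x] k elim assms B0[of n k] unfolding S_def y_def
        by (auto simp: abs_minus_commute)
    qed
    also have "\<dots> = (\<Sum>k\<in>S. Bernstein n k y)"
      using sum.inter_filter[of "{..n}" "\<lambda>k. Bernstein n k y" "\<lambda>k. k \<in> S"] setS by simp
    also have "\<dots> \<le> 2 * exp (-2 * real n * (\<eta>/2)^2)"
      unfolding S_def by (rule binom_tail) (use y01 elim assms in auto)
    finally show ?case unfolding y_def using elim by (intro mult_left_mono) auto
  qed
  show "(\<lambda>n. real n * (2 * exp (-2 * real n * (\<eta>/2)^2))) \<longlonglongrightarrow> 0"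
    using assms(4) by real_asymp
qed simp

lemma Kop_bound:
  assumes y: "y \<in> {0..1}" and cphi: "continuous_on {0..1} \<phi>" and cpsi: "continuous_on {0..1} \<psi>"
    and le: "\<And>k t. k \<le> n \<Longrightarrow> t \<in> {real k / (real n + 1) .. (real k + 1) / (real n + 1)} \<Longrightarrow>
       \<phi> t \<le> \<psi> t + (if x - \<eta> < real k / (real n + 1) \<and> (real k + 1) / (real n + 1) < x + \<eta> then 0 else C)"
  shows "Kop n \<phi> y \<le> Kop n \<psi> y + C * tailsum n y x \<eta>"
proof -
  define I where "I k = {real k / (real n + 1) .. (real k + 1) / (real n + 1)}" for k
  define c where "c k = (if x - \<eta> < real k / (real n + 1) \<and> (real k + 1) / (real n + 1) < x + \<eta> then 0 else C)" for k
  have "Kop n \<phi> y \<le> (\<Sum>k\<le>n. Bernstein n k y * (real n + 1) * integral (I k) \<psi> + Bernstein n k y * c k)"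
    unfolding Kop_def I_def[symmetric]
  proof (intro sum_mono)
    fix k assume k: "k \<in> {..n}"
    have "integral (I k) \<phi> \<le> integral (I k) (\<lambda>t. \<psi> t + c k)"
      using k le unfolding I_def c_def
      by (intro integral_le int_cont integrable_add integrable_const_ivl cphi cpsi) auto
    also have "\<dots> = integral (I k) \<psi> + c k / (real n + 1)"
      unfolding I_def using k Ik_le[of k n]
      by (subst integral_add) (auto intro!: int_cont cpsi simp: Ik_len)
    finally have "integral (I k) \<phi> \<le> integral (I k) \<psi> + c k / (real n + 1)" .
    then have "Bernstein n k y * (real n + 1) * integral (I k) \<phi> \<le> Bernstein n k y * (real n + 1) * (integral (I k) \<psi> + c k / (real n + 1))"
      using y by (intro mult_left_mono mult_nonneg_nonneg Bernstein_nonneg) auto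
    also have "\<dots> = Bernstein n k y * (real n + 1) * integral (I k) \<psi> + Bernstein n k y * c k"
      by (simp add: field_simps)
    finally show "Bernstein n k y * (real n + 1) * integral (I k) \<phi> \<le> Bernstein n k y * (real n + 1) * integral (I k) \<psi> + Bernstein n k y * c k" .
  qed
  also have "\<dots> = Kop n \<psi> y + C * tailsum n y x \<eta>"
    unfolding Kop_def tailsum_def I_def c_def sum.distrib sum_distrib_left
    by (intro arg_cong2[where f = "(+)"] refl sum.cong) auto
  finally show ?thesis .
qed

lemma peano:
  fixes h h1 :: "real \<Rightarrow> real"
  assumes "\<delta> > 0" and d1: "\<And>t. \<bar>t - x\<bar> < \<delta> \<Longrightarrow> (h has_real_derivative h1 t) (at t)"
    and d2: "(h1 has_real_derivative h2) (at x)" and "\<epsilon> > 0"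
  shows "\<exists>\<eta>>0. \<forall>t. \<bar>t - x\<bar> < \<eta> \<longrightarrow> \<bar>h t - h x - h1 x * (t - x) - h2 / 2 * (t - x)^2\<bar> \<le> \<epsilon> * (t - x)^2"
proof -
  from d2 have "((\<lambda>s. (h1 s - h1 x) / (s - x)) \<longlongrightarrow> h2) (at x)"
    by (simp add: has_field_derivative_iff)
  then obtain \<eta>0 where \<eta>0: "\<eta>0 > 0" and H: "\<And>s. s \<noteq> x \<Longrightarrow> \<bar>s - x\<bar> < \<eta>0 \<Longrightarrow> \<bar>(h1 s - h1 x) / (s - x) - h2\<bar> < \<epsilon>"
    using \<open>\<epsilon> > 0\<close> unfolding LIM_eq by (auto simp: dist_real_def)
  define \<eta> where "\<eta> = min \<eta>0 \<delta>"
  have \<eta>: "\<eta> > 0" using \<eta>0 assms by (simp add: \<eta>_def)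
  define R where "R s = h s - h x - h1 x * (s - x) - h2 / 2 * (s - x)^2" for s
  define R' where "R' s = h1 s - h1 x - h2 * (s - x)" for s
  have dR: "(R has_real_derivative R' s) (at s)" if "\<bar>s - x\<bar> < \<eta>" for s
    unfolding R_def R'_def using that d1[of s] unfolding \<eta>_def
    by (auto intro!: derivative_eq_intros simp: power2_eq_square algebra_simps)
  have bR': "\<bar>R' s\<bar> \<le> \<epsilon> * \<bar>s - x\<bar>" if "\<bar>s - x\<bar> < \<eta>" for s
  proof (cases "s = x")
    case True then show ?thesis by (simp add: R'_def)
  next
    case False
    have "\<bar>(h1 s - h1 x) / (s - x) - h2\<bar> < \<epsilon>" using H[OF False] that by (simp add: \<eta>_def)
    moreover have "R' s = ((h1 s - h1 x) / (s - x) - h2) * (s - x)"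
      using False by (simp add: R'_def field_simps)
    ultimately show ?thesis by (simp add: abs_mult mult_right_mono)
  qed
  have "\<bar>R t\<bar> \<le> \<epsilon> * (t - x)^2" if t: "\<bar>t - x\<bar> < \<eta>" for t
  proof -
    consider "t = x" | "x < t" | "t < x" by linarith
    then show ?thesis
    proof cases
      case 1 then show ?thesis by (simp add: R_def)
    next
      case 2
      obtain z where z: "x < z" "z < t" "R t - R x = (t - x) * R' z"
        using MVT2[OF 2, of R R'] dR t by auto
      have "\<bar>R t\<bar> = \<bar>t - x\<bar> * \<bar>R' z\<bar>" using z by (simp add: R_def abs_mult)
      also have "\<dots> \<le> \<bar>t - x\<bar> * (\<epsilon> * \<bar>t - x\<bar>)"
      proof (intro mult_left_mono)
        have a: "\<bar>R' z\<bar> \<le> \<epsilon> * \<bar>z - x\<bar>" using bR'[of z] z t by auto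
        have b: "\<epsilon> * \<bar>z - x\<bar> \<le> \<epsilon> * \<bar>t - x\<bar>" using z \<open>\<epsilon> > 0\<close> by (intro mult_left_mono) auto
        from a b show "\<bar>R' z\<bar> \<le> \<epsilon> * \<bar>t - x\<bar>" by linarith
      qed simp
      also have "\<bar>t - x\<bar> * (\<epsilon> * \<bar>t - x\<bar>) = \<epsilon> * (t - x)^2"
        by (simp add: power2_eq_square[symmetric] mult.left_commute)
      finally show ?thesis .
    next
      case 3
      obtain z where z: "t < z" "z < x" "R x - R t = (x - t) * R' z"
        using MVT2[OF 3, of R R'] dR t by auto
      have Rx: "R x = 0" by (simp add: R_def)
      have "R t = (t - x) * R' z" using z(3) Rx by (simp add: algebra_simps)
      then have "\<bar>R t\<bar> = \<bar>t - x\<bar> * \<bar>R' z\<bar>" by (simp add: abs_mult)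
      also have "\<dots> \<le> \<bar>t - x\<bar> * (\<epsilon> * \<bar>t - x\<bar>)"
      proof (intro mult_left_mono)
        have a: "\<bar>R' z\<bar> \<le> \<epsilon> * \<bar>z - x\<bar>" using bR'[of z] z t by auto
        have b: "\<epsilon> * \<bar>z - x\<bar> \<le> \<epsilon> * \<bar>t - x\<bar>" using z \<open>\<epsilon> > 0\<close> by (intro mult_left_mono) auto
        from a b show "\<bar>R' z\<bar> \<le> \<epsilon> * \<bar>t - x\<bar>" by linarith
      qed simp
      also have "\<bar>t - x\<bar> * (\<epsilon> * \<bar>t - x\<bar>) = \<epsilon> * (t - x)^2"
        by (simp add: power2_eq_square[symmetric] mult.left_commute)
      finally show ?thesis .
    qed
  qed
  then show ?thesis using \<eta> unfolding R_def by blast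
qed

lemma Kop_neg: "Kop n (\<lambda>t. - h t) y = - Kop n h y"
  unfolding Kop_def by (simp add: integral_neg sum_negf[symmetric])

lemma Kop_decomp:
  assumes rc: "continuous_on {0..1} r"
  shows "Kop n (\<lambda>t. a + b * (t - x) + c * (t - x)^2 + r t) y =
     a + b * (Kop n (\<lambda>t. t) y - x) + c * Kop n (\<lambda>t. (t - x)^2) y + Kop n r y"
proof -
  have "Kop n (\<lambda>t. a + b * (t - x) + c * (t - x)^2 + r t) y =
        Kop n (\<lambda>t. a + b * (t - x) + c * (t - x)^2) y + Kop n r y"
    by (rule Kop_add) (auto intro!: continuous_intros rc)
  moreover have "Kop n (\<lambda>t. a + b * (t - x) + c * (t - x)^2) y =
        Kop n (\<lambda>t. a + b * (t - x)) y + Kop n (\<lambda>t. c * (t - x)^2) y"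
    by (rule Kop_add) (auto intro!: continuous_intros)
  moreover have "Kop n (\<lambda>t. a + b * (t - x)) y = Kop n (\<lambda>t. a) y + Kop n (\<lambda>t. b * (t - x)) y"
    by (rule Kop_add) (auto intro!: continuous_intros)
  moreover have "Kop n (\<lambda>t. b * (t - x)) y = b * Kop n (\<lambda>t. t - x) y" by (rule Kop_cmult)
  moreover have "Kop n (\<lambda>t. t - x) y = Kop n (\<lambda>t. t) y - Kop n (\<lambda>t. x) y"
    by (rule Kop_diff) (auto intro!: continuous_intros)
  moreover have "Kop n (\<lambda>t. c * (t - x)^2) y = c * Kop n (\<lambda>t. (t - x)^2) y" by (rule Kop_cmult)
  ultimately show ?thesis by (simp add: Kop_const)
qed

lemma vor:
  fixes h h1 :: "real \<Rightarrow> real"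
  assumes mu: "\<mu> > 0" and x: "0 < x" "x < 1" and hc: "continuous_on {0..1} h"
    and "\<delta> > 0" and d1: "\<And>t. \<bar>t - x\<bar> < \<delta> \<Longrightarrow> (h has_real_derivative h1 t) (at t)"
    and d2: "(h1 has_real_derivative h2) (at x)"
  shows "(\<lambda>n. real n * (Kop n h (aseq \<mu> (n+1) x) - h x)) \<longlonglongrightarrow> Acoef \<mu> x * h1 x + Bcoef x * h2"
proof -
  define R where "R t = h t - h x - h1 x * (t - x) - h2 / 2 * (t - x)^2" for t
  have Rc: "continuous_on {0..1} R" unfolding R_def by (intro continuous_intros hc)
  define Y where "Y n = aseq \<mu> (n+1) x" for n
  have Y01: "Y n \<in> {0..1}" for n using aseq_01[of \<mu> x n] mu x unfolding Y_def by auto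
  have dec: "real n * (Kop n h (Y n) - h x) = h1 x * (real n * (Kop n (\<lambda>t. t) (Y n) - x))
      + h2 / 2 * (real n * Kop n (\<lambda>t. (t - x)^2) (Y n)) + real n * Kop n R (Y n)" for n
  proof -
    have "Kop n h (Y n) = Kop n (\<lambda>t. h x + h1 x * (t - x) + h2 / 2 * (t - x)^2 + R t) (Y n)"
      by (rule arg_cong[where f = "\<lambda>f. Kop n f (Y n)"]) (auto simp: R_def fun_eq_iff)
    also have "\<dots> = h x + h1 x * (Kop n (\<lambda>t. t) (Y n) - x) + h2 / 2 * Kop n (\<lambda>t. (t - x)^2) (Y n) + Kop n R (Y n)"
      by (rule Kop_decomp[OF Rc])
    finally have E: "Kop n h (Y n) = h x + h1 x * (Kop n (\<lambda>t. t) (Y n) - x) + h2 / 2 * Kop n (\<lambda>t. (t - x)^2) (Y n) + Kop n R (Y n)" .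
    show ?thesis unfolding E by (simp add: algebra_simps)
  qed
  have RT: "(\<lambda>n. real n * Kop n R (Y n)) \<longlonglongrightarrow> 0"
  proof (rule tendstoI)
    fix e :: real assume e: "e > 0"
    obtain \<eta> where \<eta>: "\<eta> > 0" and H\<eta>: "\<And>t. \<bar>t - x\<bar> < \<eta> \<Longrightarrow> \<bar>R t\<bar> \<le> (e/4) * (t - x)^2"
      using peano[OF \<open>\<delta> > 0\<close> d1 d2, of "e/4"] e unfolding R_def by auto
    obtain t0 where "t0 \<in> {0..1}" and t0: "\<And>t. t \<in> {0..1} \<Longrightarrow> \<bar>R t\<bar> \<le> \<bar>R t0\<bar>"
    proof -
      have "continuous_on {0..1} (\<lambda>t. \<bar>R t\<bar>)" by (intro continuous_intros Rc)
      from continuous_attains_sup[OF _ _ this] show ?thesis using that by auto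
    qed
    define C where "C = \<bar>R t0\<bar>"
    have C: "C \<ge> 0" "\<And>t. t \<in> {0..1} \<Longrightarrow> \<bar>R t\<bar> \<le> C" using t0 by (auto simp: C_def)
    have T: "(\<lambda>n. C * (real n * tailsum n (Y n) x \<eta>)) \<longlonglongrightarrow> C * 0"
      unfolding Y_def by (intro tendsto_intros tail_lim mu x \<eta>)
    have ev1: "eventually (\<lambda>n. C * (real n * tailsum n (Y n) x \<eta>) < e/2) sequentially"
      using order_tendstoD(2)[OF T, of "e/2"] e by simp
    have M2: "(\<lambda>n. real n * Kop n (\<lambda>t. (t - x)^2) (Y n)) \<longlonglongrightarrow> x - x^2"
      unfolding Y_def by (rule lim_M2[OF x mu])
    have "x - x^2 < 1" using x zero_le_power2[of x] by linarith
    then have ev2: "eventually (\<lambda>n. real n * Kop n (\<lambda>t. (t - x)^2) (Y n) < 1) sequentially"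
      using order_tendstoD(2)[OF M2] by simp
    show "eventually (\<lambda>n. dist (real n * Kop n R (Y n)) 0 < e) sequentially"
      using ev1 ev2
    proof eventually_elim
      case (elim n)
      define y where "y = Y n"
      have y: "y \<in> {0..1}" using Y01 unfolding y_def by simp
      have cond: "F t \<le> e/4 * (t - x)^2 + (if x - \<eta> < real k / (real n + 1) \<and> (real k + 1) / (real n + 1) < x + \<eta> then 0 else C)"
        if "k \<le> n" "t \<in> {real k / (real n + 1) .. (real k + 1) / (real n + 1)}" "F = R \<or> F = (\<lambda>t. - R t)" for k t F
      proof -
        have t01: "t \<in> {0..1}" by (rule subsetD[OF Ik_sub[OF that(1)] that(2)])
        have "F t \<le> \<bar>R t\<bar>" using that(3) by auto
        show ?thesis
        proof (cases "x - \<eta> < real k / (real n + 1) \<and> (real k + 1) / (real n + 1) < x + \<eta>")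
          case True
          then have "\<bar>t - x\<bar> < \<eta>" using that(2) by auto
          then show ?thesis using H\<eta> \<open>F t \<le> \<bar>R t\<bar>\<close> True by force
        next
          case False
          have "0 \<le> e/4 * (t - x)^2" using e by simp
          moreover have "(if x - \<eta> < real k / (real n + 1) \<and> (real k + 1) / (real n + 1) < x + \<eta> then 0 else C) = C"
            using False by (simp only: if_False)
          ultimately show ?thesis using C(2)[OF t01] \<open>F t \<le> \<bar>R t\<bar>\<close> by linarith
        qed
      qed
      have b1: "Kop n R y \<le> Kop n (\<lambda>t. e/4 * (t - x)^2) y + C * tailsum n y x \<eta>"
      proof (rule Kop_bound[OF y Rc])
        show "continuous_on {0..1} (\<lambda>t. e/4 * (t - x)^2)" by (intro continuous_intros)
      next
        fix k t assume "k \<le> n" "t \<in> {real k / (real n + 1) .. (real k + 1) / (real n + 1)}"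
        then show "R t \<le> e/4 * (t - x)^2 + (if x - \<eta> < real k / (real n + 1) \<and> (real k + 1) / (real n + 1) < x + \<eta> then 0 else C)"
          by (rule cond) simp
      qed
      have b2: "Kop n (\<lambda>t. - R t) y \<le> Kop n (\<lambda>t. e/4 * (t - x)^2) y + C * tailsum n y x \<eta>"
      proof (rule Kop_bound[OF y])
        show "continuous_on {0..1} (\<lambda>t. e/4 * (t - x)^2)" by (intro continuous_intros)
        show "continuous_on {0..1} (\<lambda>t. - R t)" by (intro continuous_intros Rc)
      next
        fix k t assume "k \<le> n" "t \<in> {real k / (real n + 1) .. (real k + 1) / (real n + 1)}"
        then show "- R t \<le> e/4 * (t - x)^2 + (if x - \<eta> < real k / (real n + 1) \<and> (real k + 1) / (real n + 1) < x + \<eta> then 0 else C)"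
          using cond[of k t "\<lambda>t. - R t"] by simp
      qed
      have "\<bar>Kop n R y\<bar> \<le> e/4 * Kop n (\<lambda>t. (t - x)^2) y + C * tailsum n y x \<eta>"
        using b1 b2 unfolding Kop_neg Kop_cmult by linarith
      then have "real n * \<bar>Kop n R y\<bar> \<le> real n * (e/4 * Kop n (\<lambda>t. (t - x)^2) y + C * tailsum n y x \<eta>)"
        by (intro mult_left_mono) auto
      also have "\<dots> = e/4 * (real n * Kop n (\<lambda>t. (t - x)^2) y) + C * (real n * tailsum n y x \<eta>)"
        by (simp add: algebra_simps)
      also have "\<dots> < e/4 * 1 + e/2"
        using elim e unfolding y_def by (intro add_less_le_mono mult_strict_left_mono) auto
      finally have "real n * \<bar>Kop n R y\<bar> < e/4 * 1 + e/2" .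
      then have "real n * \<bar>Kop n R y\<bar> < e" using e by linarith
      then show ?case by (simp add: dist_real_def abs_mult y_def)
    qed
  qed
  have "(\<lambda>n. h1 x * (real n * (Kop n (\<lambda>t. t) (Y n) - x)) + h2 / 2 * (real n * Kop n (\<lambda>t. (t - x)^2) (Y n)) + real n * Kop n R (Y n))
     \<longlonglongrightarrow> h1 x * Acoef \<mu> x + h2 / 2 * (x - x^2) + 0"
    unfolding Y_def by (intro tendsto_intros lim_M1[OF x mu] lim_M2[OF x mu] RT[unfolded Y_def])
  then have "(\<lambda>n. real n * (Kop n h (Y n) - h x)) \<longlonglongrightarrow> h1 x * Acoef \<mu> x + h2 / 2 * (x - x^2) + 0"
    by (simp only: dec)
  moreover have eq: "h1 x * Acoef \<mu> x + h2 / 2 * (x - x^2) + 0 = Acoef \<mu> x * h1 x + Bcoef x * h2"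
    by (simp add: Bcoef_def field_simps)
  ultimately show ?thesis unfolding Y_def by (simp only: eq)
qed

lemma lmp:
  fixes g V :: "real \<Rightarrow> real"
  assumes mu: "\<mu> > 0" and gc: "continuous_on {0..1} g"
    and Hg: "\<And>x. 0 < x \<Longrightarrow> x < 1 \<Longrightarrow> (\<lambda>n. real n * (Kop n g (aseq \<mu> (n+1) x) - g x)) \<longlonglongrightarrow> 0"
    and Vc: "continuous_on {0..1} V" and ab: "0 < a" "a < b" "b < 1"
    and VD: "\<And>x. a < x \<Longrightarrow> x < b \<Longrightarrow> \<exists>\<delta>>0. \<exists>V1 V2. (\<forall>t. \<bar>t - x\<bar> < \<delta> \<longrightarrow> (V has_real_derivative V1 t) (at t))
          \<and> (V1 has_real_derivative V2) (at x) \<and> Acoef \<mu> x * V1 x + Bcoef x * V2 > 0"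
    and xab: "a \<le> x" "x \<le> b"
  shows "g x + V x \<le> max (g a + V a) (g b + V b)"
proof (rule ccontr)
  assume contra: "\<not> ?thesis"
  define P where "P t = g t + V t" for t
  have Pc: "continuous_on {0..1} P" unfolding P_def by (intro continuous_intros gc Vc)
  have Pcab: "continuous_on {a..b} P" by (rule continuous_on_subset[OF Pc]) (use ab in auto)
  obtain x1 where x1: "x1 \<in> {a..b}" and x1max: "\<And>t. t \<in> {a..b} \<Longrightarrow> P t \<le> P x1"
    using continuous_attains_sup[OF compact_Icc _ Pcab] ab by auto
  have "P x1 \<ge> P x" using x1max xab by auto
  then have "P x1 > P a" "P x1 > P b" using contra unfolding P_def by auto
  then have x1ab: "a < x1" "x1 < b" using x1 by (auto simp: order.order_iff_strict)
  have x101: "0 < x1" "x1 < 1" using x1ab ab by auto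
  obtain \<delta> V1 V2 where "\<delta> > 0" and dV1: "\<And>t. \<bar>t - x1\<bar> < \<delta> \<Longrightarrow> (V has_real_derivative V1 t) (at t)"
    and dV2: "(V1 has_real_derivative V2) (at x1)" and Dpos: "Acoef \<mu> x1 * V1 x1 + Bcoef x1 * V2 > 0"
    using VD[OF x1ab] by blast
  define Y where "Y n = aseq \<mu> (n+1) x1" for n
  have Y01: "Y n \<in> {0..1}" for n using aseq_01[of \<mu> x1 n] mu x101 unfolding Y_def by auto
  have limV: "(\<lambda>n. real n * (Kop n V (Y n) - V x1)) \<longlonglongrightarrow> Acoef \<mu> x1 * V1 x1 + Bcoef x1 * V2"
    unfolding Y_def by (rule vor[OF mu x101 Vc \<open>\<delta> > 0\<close> dV1 dV2])
  have limg: "(\<lambda>n. real n * (Kop n g (Y n) - g x1)) \<longlonglongrightarrow> 0"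
    unfolding Y_def by (rule Hg[OF x101])
  have "(\<lambda>n. real n * (Kop n g (Y n) - g x1) + real n * (Kop n V (Y n) - V x1)) \<longlonglongrightarrow> 0 + (Acoef \<mu> x1 * V1 x1 + Bcoef x1 * V2)"
    by (intro tendsto_add limg limV)
  moreover have "real n * (Kop n g (Y n) - g x1) + real n * (Kop n V (Y n) - V x1) = real n * (Kop n P (Y n) - P x1)" for n
    unfolding P_def by (subst Kop_add[OF gc Vc]) (simp add: algebra_simps)
  ultimately have limP: "(\<lambda>n. real n * (Kop n P (Y n) - P x1)) \<longlonglongrightarrow> Acoef \<mu> x1 * V1 x1 + Bcoef x1 * V2"
    by simp
  obtain t0 where "t0 \<in> {0..1}" and t0: "\<And>t. t \<in> {0..1} \<Longrightarrow> \<bar>P t\<bar> \<le> \<bar>P t0\<bar>"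
  proof -
    have "continuous_on {0..1} (\<lambda>t. \<bar>P t\<bar>)" by (intro continuous_intros Pc)
    from continuous_attains_sup[OF _ _ this] show ?thesis using that by auto
  qed
  define C where "C = 2 * \<bar>P t0\<bar>"
  have "C \<ge> 0" unfolding C_def by simp
  define \<eta> where "\<eta> = min (x1 - a) (b - x1)"
  have \<eta>: "\<eta> > 0" using x1ab by (simp add: \<eta>_def)
  have x1_01: "x1 \<in> {0..1}" using x101 by auto
  have up: "real n * (Kop n P (Y n) - P x1) \<le> C * (real n * tailsum n (Y n) x1 \<eta>)" for n
  proof -
    have "Kop n P (Y n) - P x1 = Kop n (\<lambda>t. P t - P x1) (Y n)"
      by (subst Kop_diff) (auto intro!: continuous_intros Pc simp: Kop_const)
    also have "\<dots> \<le> Kop n (\<lambda>t. 0) (Y n) + C * tailsum n (Y n) x1 \<eta>"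
    proof (rule Kop_bound[OF Y01])
      show "continuous_on {0..1} (\<lambda>t. P t - P x1)" by (intro continuous_intros Pc)
      show "continuous_on {0..1} (\<lambda>t. 0::real)" by simp
    next
      fix k t assume k: "k \<le> n" and t: "t \<in> {real k / (real n + 1) .. (real k + 1) / (real n + 1)}"
      have t01: "t \<in> {0..1}" by (rule subsetD[OF Ik_sub[OF k] t])
      show "P t - P x1 \<le> 0 + (if x1 - \<eta> < real k / (real n + 1) \<and> (real k + 1) / (real n + 1) < x1 + \<eta> then 0 else C)"
      proof (cases "x1 - \<eta> < real k / (real n + 1) \<and> (real k + 1) / (real n + 1) < x1 + \<eta>")
        case True
        then have "t \<in> {a..b}" using t unfolding \<eta>_def by auto
        then have "P t - P x1 \<le> 0" using x1max by auto
        then show ?thesis using True by simp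
      next
        case False
        have "P t - P x1 \<le> C" using t0[OF t01] t0[OF x1_01] unfolding C_def by linarith
        moreover have "(if x1 - \<eta> < real k / (real n + 1) \<and> (real k + 1) / (real n + 1) < x1 + \<eta> then 0 else C) = C"
          using False by (simp only: if_False)
        ultimately show ?thesis by linarith
      qed
    qed
    finally have "Kop n P (Y n) - P x1 \<le> C * tailsum n (Y n) x1 \<eta>" by (simp add: Kop_const)
    then show ?thesis by (metis mult_left_mono of_nat_0_le_iff mult.left_commute)
  qed
  have limT: "(\<lambda>n. C * (real n * tailsum n (Y n) x1 \<eta>)) \<longlonglongrightarrow> C * 0"
    unfolding Y_def by (intro tendsto_intros tail_lim x101 mu \<eta>)
  have "Acoef \<mu> x1 * V1 x1 + Bcoef x1 * V2 \<le> C * 0"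
    by (rule LIMSEQ_le[OF limP limT]) (use up in auto)
  then show False using Dpos by simp
qed

lemma D_gen:
  fixes x u c e :: real
  assumes "x \<noteq> 0" "u \<noteq> 0" "c \<noteq> 0" "x + u = 1"
  shows "(1/2 + x * u / (2 * c) - x) * (e * (1 / x + 1 / u)) + (x * u / 2) * (e * (- 1 / x^2 + 1 / u^2)) = e / (2 * c)"
proof -
  have "(1/2 + x * u / (2 * c) - x) * (e * (1 / x + 1 / u)) + (x * u / 2) * (e * (- 1 / x^2 + 1 / u^2))
      = e * ((c - 2 * c * x + x * u) * (x + u) + c * (x - u) * (x + u)) / (2 * c * x * u)"
    using assms(1-3) by (simp add: field_simps power2_eq_square)
  also have "(c - 2 * c * x + x * u) * (x + u) + c * (x - u) * (x + u) = x * u"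
    using assms(4) by algebra
  finally show ?thesis using assms(1-3) by (simp add: field_simps)
qed

lemma D_barrier:
  assumes "\<mu> > 0" "0 < x" "x < 1"
  shows "Acoef \<mu> x * (\<epsilon> * (1 / x + 1 / (1 - x))) + Bcoef x * (\<epsilon> * (- 1 / x^2 + 1 / (1 - x)^2)) = \<epsilon> / (2 * (1 + \<mu>))"
proof -
  have e1: "Acoef \<mu> x = 1/2 + x * (1 - x) / (2 * (1 + \<mu>)) - x" unfolding Acoef_def by (simp add: power2_eq_square algebra_simps)
  have e2: "Bcoef x = x * (1 - x) / 2" unfolding Bcoef_def by (simp add: power2_eq_square algebra_simps)
  show ?thesis unfolding e1 e2 by (rule D_gen) (use assms in auto)
qed

lemma mono_lemma:
  fixes g :: "real \<Rightarrow> real"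
  assumes mu: "\<mu> > 0" and gc: "continuous_on {0..1} g"
    and Hg: "\<And>x. 0 < x \<Longrightarrow> x < 1 \<Longrightarrow> (\<lambda>n. real n * (Kop n g (aseq \<mu> (n+1) x) - g x)) \<longlonglongrightarrow> 0"
    and xb: "0 < x" "x < b" "b < 1"
  shows "g x \<le> g b"
proof -
  obtain t0 where "t0 \<in> {0..1}" and t0: "\<And>t. t \<in> {0..1} \<Longrightarrow> \<bar>g t\<bar> \<le> \<bar>g t0\<bar>"
  proof -
    have "continuous_on {0..1} (\<lambda>t. \<bar>g t\<bar>)" by (intro continuous_intros gc)
    from continuous_attains_sup[OF _ _ this] show ?thesis using that by auto
  qed
  define M where "M = \<bar>g t0\<bar>"
  have gM: "\<bar>g t\<bar> \<le> M" if "t \<in> {0..1}" for t using t0[OF that] by (simp add: M_def)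
  define W where "W t = ln t - ln (1 - t)" for t :: real
  define K where "K = \<bar>W b - W x\<bar>"
  have main: "g x \<le> g b + \<epsilon> * K" if e: "\<epsilon> > 0" for \<epsilon>
  proof -
    define a where "a = min (x/2) (min (1/2) (exp ((\<epsilon> * W b - 2 * M) / \<epsilon> - ln 2)))"
    have a0: "a > 0" "a < x" "a \<le> 1/2" using xb by (auto simp: a_def)
    have ab: "a < b" using a0 xb by simp
    have aexp: "a \<le> exp ((\<epsilon> * W b - 2 * M) / \<epsilon> - ln 2)" by (simp add: a_def)
    define V where "V t = \<epsilon> * (ln (max a t) - ln (1 - min b t))" for t
    have Vc: "continuous_on {0..1} V" unfolding V_def
      using a0 xb by (intro continuous_intros) (auto simp: max_def min_def)
    have VD: "\<exists>\<delta>>0. \<exists>V1 V2. (\<forall>t. \<bar>t - y\<bar> < \<delta> \<longrightarrow> (V has_real_derivative V1 t) (at t))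
          \<and> (V1 has_real_derivative V2) (at y) \<and> Acoef \<mu> y * V1 y + Bcoef y * V2 > 0"
      if y: "a < y" "y < b" for y
    proof (intro exI conjI allI impI)
      show "min (y - a) (b - y) > 0" using y by simp
    next
      fix t assume "\<bar>t - y\<bar> < min (y - a) (b - y)"
      then have t: "a < t" "t < b" by auto
      have "((\<lambda>t. \<epsilon> * (ln t - ln (1 - t))) has_real_derivative \<epsilon> * (1 / t + 1 / (1 - t))) (at t)"
        using t a0 xb by (auto intro!: derivative_eq_intros simp: field_simps)
      then show "(V has_real_derivative \<epsilon> * (1 / t + 1 / (1 - t))) (at t)"
      proof (rule has_field_derivative_transform_within_open[where S = "{a<..<b}"])
        show "open {a<..<b}" by simp
        show "t \<in> {a<..<b}" using t by simp
        fix s assume "s \<in> {a<..<b}"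
        then show "\<epsilon> * (ln s - ln (1 - s)) = V s" by (simp add: V_def max_def min_def)
      qed
    next
      have y01: "0 < y" "y < 1" using y a0 xb by auto
      show "((\<lambda>t. \<epsilon> * (1 / t + 1 / (1 - t))) has_real_derivative \<epsilon> * (- 1 / y^2 + 1 / (1 - y)^2)) (at y)"
        using y01 by (auto intro!: derivative_eq_intros simp: field_simps power2_eq_square)
      show "Acoef \<mu> y * (\<epsilon> * (1 / y + 1 / (1 - y))) + Bcoef y * (\<epsilon> * (- 1 / y^2 + 1 / (1 - y)^2)) > 0"
        using D_barrier[OF mu y01, of \<epsilon>] e mu by simp
    qed
    have L: "g x + V x \<le> max (g a + V a) (g b + V b)"
      by (rule lmp[OF mu gc Hg Vc a0(1) ab xb(3) VD]) (use a0 xb in auto)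
    have Vx: "V x = \<epsilon> * W x" using a0 xb by (simp add: V_def W_def max_def min_def)
    have Vb: "V b = \<epsilon> * W b" using a0 xb by (simp add: V_def W_def max_def min_def)
    have Va: "V a = \<epsilon> * (ln a - ln (1 - a))" using a0 xb by (simp add: V_def max_def min_def)
    have l1: "- ln (1 - a) \<le> ln 2"
    proof -
      have "ln (1/2) \<le> ln (1 - a)" using a0 by (subst ln_le_cancel_iff) auto
      then show ?thesis by (simp add: ln_div)
    qed
    have l2: "ln a \<le> (\<epsilon> * W b - 2 * M) / \<epsilon> - ln 2"
    proof -
      have "ln a \<le> ln (exp ((\<epsilon> * W b - 2 * M) / \<epsilon> - ln 2))"
        using a0 aexp by (subst ln_le_cancel_iff) auto
      then show ?thesis by simp
    qed
    have "\<epsilon> * ln a \<le> \<epsilon> * ((\<epsilon> * W b - 2 * M) / \<epsilon> - ln 2)"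
      using l2 e by (intro mult_left_mono) auto
    also have "\<dots> = \<epsilon> * W b - 2 * M - \<epsilon> * ln 2" using e by (simp add: field_simps)
    finally have l3: "\<epsilon> * ln a \<le> \<epsilon> * W b - 2 * M - \<epsilon> * ln 2" .
    have l4: "\<epsilon> * (- ln (1 - a)) \<le> \<epsilon> * ln 2" using l1 e by (intro mult_left_mono) auto
    have ga: "g a \<le> M" using gM[of a] a0 by auto
    have gb: "- M \<le> g b" using gM[of b] xb by auto
    have "g a + V a \<le> g b + V b" unfolding Va Vb using l3 l4 ga gb by (simp add: algebra_simps)
    then have "g x + V x \<le> g b + V b" using L by simp
    then have "g x \<le> g b + \<epsilon> * (W b - W x)" unfolding Vx Vb by (simp add: algebra_simps)
    also have "\<epsilon> * (W b - W x) \<le> \<epsilon> * K" unfolding K_def using e by (intro mult_left_mono) auto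
    finally show ?thesis by simp
  qed
  show ?thesis
  proof (rule ccontr)
    assume "\<not> g x \<le> g b"
    then have d: "g x - g b > 0" by simp
    have K0: "K \<ge> 0" by (simp add: K_def)
    define \<epsilon> where "\<epsilon> = (g x - g b) / (K + 1)"
    have e: "\<epsilon> > 0" using d K0 by (simp add: \<epsilon>_def)
    have "\<epsilon> * K < g x - g b"
    proof -
      have "\<epsilon> * K < \<epsilon> * (K + 1)" using e by simp
      also have "\<dots> = g x - g b" using K0 by (simp add: \<epsilon>_def)
      finally show ?thesis .
    qed
    then show False using main[OF e] by simp
  qed
qed

lemma lnmu_pos: "\<mu> > 0 \<Longrightarrow> 0 \<le> x \<Longrightarrow> lnmu \<mu> x > 0"
  unfolding lnmu_def by (intro ln_gt_zero) simp

lemma fmu_cont: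
  assumes "\<mu> > 0" "continuous_on {0..1} f"
  shows "continuous_on {0..1} (fmu \<mu> f)"
proof -
  have "continuous_on {0..1} (\<lambda>x. f x / ln (1 + \<mu> + x))"
    using assms by (intro continuous_intros) (auto intro!: ln_gt_zero[THEN less_imp_neq, symmetric])
  then show ?thesis unfolding fmu_def lnmu_def by simp
qed

lemma conv:
  assumes mu: "\<mu> > 0" and x: "0 \<le> x"
  shows "(\<lambda>n. \<bar>LK \<mu> n f x - f x\<bar>) \<in> o(\<lambda>n. 1 / real n) \<longleftrightarrow>
    (\<lambda>n. real n * (Kop n (fmu \<mu> f) (aseq \<mu> (n+1) x) - fmu \<mu> f x)) \<longlonglongrightarrow> 0"
proof -
  define D where "D n = real n * (Kop n (fmu \<mu> f) (aseq \<mu> (n+1) x) - fmu \<mu> f x)" for n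
  have L: "lnmu \<mu> x > 0" by (rule lnmu_pos[OF mu x])
  have Deq: "D = (\<lambda>n. real n * (Kop n (fmu \<mu> f) (aseq \<mu> (n+1) x) - fmu \<mu> f x))"
    by (rule ext) (simp add: D_def)
  have eq: "\<bar>LK \<mu> n f x - f x\<bar> / (1 / real n) = lnmu \<mu> x * \<bar>D n\<bar>" for n
  proof -
    have "f x = lnmu \<mu> x * fmu \<mu> f x" using L by (simp add: fmu_def)
    then have "LK \<mu> n f x - f x = lnmu \<mu> x * (Kop n (fmu \<mu> f) (aseq \<mu> (n+1) x) - fmu \<mu> f x)"
      by (simp add: LK_Kop algebra_simps)
    then show ?thesis using L by (simp add: D_def abs_mult)
  qed
  show ?thesis
  proof
    assume "(\<lambda>n. \<bar>LK \<mu> n f x - f x\<bar>) \<in> o(\<lambda>n. 1 / real n)"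
    from smalloD_tendsto[OF this] have "(\<lambda>n. lnmu \<mu> x * \<bar>D n\<bar>) \<longlonglongrightarrow> 0" by (simp only: eq)
    then have "(\<lambda>n. (1 / lnmu \<mu> x) * (lnmu \<mu> x * \<bar>D n\<bar>)) \<longlonglongrightarrow> (1 / lnmu \<mu> x) * 0"
      by (intro tendsto_intros)
    then have "(\<lambda>n. \<bar>D n\<bar>) \<longlonglongrightarrow> 0" using L by simp
    then have "D \<longlonglongrightarrow> 0" by (simp add: tendsto_rabs_zero_iff)
    then show "(\<lambda>n. real n * (Kop n (fmu \<mu> f) (aseq \<mu> (n+1) x) - fmu \<mu> f x)) \<longlonglongrightarrow> 0"
      unfolding Deq .
  next
    assume "(\<lambda>n. real n * (Kop n (fmu \<mu> f) (aseq \<mu> (n+1) x) - fmu \<mu> f x)) \<longlonglongrightarrow> 0"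
    then have "D \<longlonglongrightarrow> 0" unfolding Deq .
    then have "(\<lambda>n. lnmu \<mu> x * \<bar>D n\<bar>) \<longlonglongrightarrow> lnmu \<mu> x * \<bar>0\<bar>" by (intro tendsto_intros)
    then have "(\<lambda>n. \<bar>LK \<mu> n f x - f x\<bar> / (1 / real n)) \<longlonglongrightarrow> 0" by (simp only: eq) simp
    moreover have ev: "eventually (\<lambda>n. 1 / real n \<noteq> 0) sequentially"
      using eventually_gt_at_top[of "0::nat"] by eventually_elim simp
    ultimately show "(\<lambda>n. \<bar>LK \<mu> n f x - f x\<bar>) \<in> o(\<lambda>n. 1 / real n)"
      by (rule smalloI_tendsto)
  qed
qed

theorem theorem5p1:
  fixes \<mu> :: real and f :: "real \<Rightarrow> real"
  assumes "\<mu> > 0" and "continuous_on {0..1} f"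
  shows "(\<forall>x\<in>{0<..<1}. (\<lambda>n. \<bar>LK \<mu> n f x - f x\<bar>) \<in> o(\<lambda>n. 1 / real n))
     \<longleftrightarrow> (\<exists>f1 f2. \<forall>x\<in>{0<..<1::real}.
            (fmu \<mu> f has_real_derivative f1 x) (at x) \<and>
            (f1 has_real_derivative f2 x) (at x) \<and>
            Acoef \<mu> x * f1 x + Bcoef x * f2 x = 0)"
proof -
  note mu = assms(1)
  define g where "g = fmu \<mu> f"
  have gc: "continuous_on {0..1} g" unfolding g_def by (rule fmu_cont[OF assms])
  show ?thesis
  proof
    assume H: "\<forall>x\<in>{0<..<1}. (\<lambda>n. \<bar>LK \<mu> n f x - f x\<bar>) \<in> o(\<lambda>n. 1 / real n)"
    have Hg: "(\<lambda>n. real n * (Kop n g (aseq \<mu> (n+1) x) - g x)) \<longlonglongrightarrow> 0" if "0 < x" "x < 1" for x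
      using H that conv[OF mu, of x f] unfolding g_def by auto
    have Hg': "(\<lambda>n. real n * (Kop n (\<lambda>t. - g t) (aseq \<mu> (n+1) x) - (- g x))) \<longlonglongrightarrow> 0" if "0 < x" "x < 1" for x
    proof -
      have "(\<lambda>n. - (real n * (Kop n g (aseq \<mu> (n+1) x) - g x))) \<longlonglongrightarrow> - 0"
        by (intro tendsto_minus Hg that)
      then show ?thesis by (simp add: Kop_neg algebra_simps)
    qed
    have gc': "continuous_on {0..1} (\<lambda>t. - g t)" by (intro continuous_intros gc)
    have geq: "g x = g b" if "0 < x" "x < b" "b < 1" for x b
    proof -
      have "g x \<le> g b" by (rule mono_lemma[OF mu gc Hg that])
      moreover have "- g x \<le> - g b" by (rule mono_lemma[OF mu gc' Hg' that])
      ultimately show ?thesis by simp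
    qed
    have gconst: "g x = g (1/2)" if "0 < x" "x < 1" for x
    proof -
      consider "x < 1/2" | "x = 1/2" | "x > 1/2" by linarith
      then show ?thesis
      proof cases
        case 1 then show ?thesis using geq[of x "1/2"] that by auto
      next
        case 2 then show ?thesis by (simp only: 2)
      next
        case 3 then show ?thesis using geq[of "1/2" x] that by auto
      qed
    qed
    show "\<exists>f1 f2. \<forall>x\<in>{0<..<1::real}.
            (fmu \<mu> f has_real_derivative f1 x) (at x) \<and>
            (f1 has_real_derivative f2 x) (at x) \<and>
            Acoef \<mu> x * f1 x + Bcoef x * f2 x = 0"
    proof (intro exI ballI conjI)
      fix x :: real assume x: "x \<in> {0<..<1}"
      have "((\<lambda>_. g (1/2)) has_real_derivative 0) (at x)" by simp
      then show "(fmu \<mu> f has_real_derivative 0) (at x)"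
      proof (rule has_field_derivative_transform_within_open[where S = "{0<..<1}"])
        show "open {0<..<(1::real)}" by simp
        show "x \<in> {0<..<1}" by (rule x)
        fix s :: real assume "s \<in> {0<..<1}"
        then show "g (1/2) = fmu \<mu> f s" using gconst[of s] unfolding g_def by auto
      qed
      show "((\<lambda>_. 0) has_real_derivative 0) (at x)" by simp
      show "Acoef \<mu> x * 0 + Bcoef x * 0 = 0" by simp
    qed
  next
    assume "\<exists>f1 f2. \<forall>x\<in>{0<..<1::real}.
            (fmu \<mu> f has_real_derivative f1 x) (at x) \<and>
            (f1 has_real_derivative f2 x) (at x) \<and>
            Acoef \<mu> x * f1 x + Bcoef x * f2 x = 0"
    then obtain f1 f2 where F: "\<And>x. x \<in> {0<..<1} \<Longrightarrow> (g has_real_derivative f1 x) (at x) \<and>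
            (f1 has_real_derivative f2 x) (at x) \<and> Acoef \<mu> x * f1 x + Bcoef x * f2 x = 0"
      unfolding g_def by blast
    show "\<forall>x\<in>{0<..<1}. (\<lambda>n. \<bar>LK \<mu> n f x - f x\<bar>) \<in> o(\<lambda>n. 1 / real n)"
    proof
      fix x :: real assume x: "x \<in> {0<..<1}"
      have x01: "0 < x" "x < 1" using x by auto
      have d1: "(g has_real_derivative f1 t) (at t)" if "\<bar>t - x\<bar> < min x (1 - x)" for t
      proof -
        have "0 < t \<and> t < 1" using that by (auto simp: abs_less_iff)
        then show ?thesis using F[of t] by auto
      qed
      have "(\<lambda>n. real n * (Kop n g (aseq \<mu> (n+1) x) - g x)) \<longlonglongrightarrow> Acoef \<mu> x * f1 x + Bcoef x * f2 x"
      proof (rule vor[OF mu x01 gc])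
        show "0 < min x (1 - x)" using x01 by simp
        show "\<And>t. \<bar>t - x\<bar> < min x (1 - x) \<Longrightarrow> (g has_real_derivative f1 t) (at t)" by (rule d1)
        show "(f1 has_real_derivative f2 x) (at x)" using F[OF x] by simp
      qed
      then have "(\<lambda>n. real n * (Kop n g (aseq \<mu> (n+1) x) - g x)) \<longlonglongrightarrow> 0"
        using F[OF x] by simp
      then show "(\<lambda>n. \<bar>LK \<mu> n f x - f x\<bar>) \<in> o(\<lambda>n. 1 / real n)"
        using conv[OF mu, of x f] x01 unfolding g_def by auto
    qed
  qed
qed

end
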